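(* Let $(\lambda_k)_{k\ge1}$, $(\mu_k)_{k\ge1}$ be nonzero real numbers with $|\lambda_1|>|\mu_1|>|\lambda_2|>|\mu_2|>\dots>0$ and $\lambda_k\to0$, let $\sigma=\{\lambda_k^2:k\ge1\}\cup\{0\}$, and let $\Phi(z)=\prod_{k\ge1}\frac{z-\mu_k^2}{z-\lambda_k^2}$. Then $\Phi$ is the only function analytic in $\mathbb{C}\setminus\sigma$ satisfying all of the following: (1) $\Phi(\bar z)=\overline{\Phi(z)}$; (2) it has simple poles at the points $\lambda_k^2$, and its only zeros are simple zeros at the points $\mu_k^2$; (3) its limit as $z\to\infty$ equals $1$; (4) its imaginary part is strictly negative at every point of the open upper half-plane. *)

theory Defs
  imports "HOL-Complex_Analysis.Complex_Analysis"
begin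

text \<open>The sequences are indexed from 0 (the paper indexes from 1).\<close>

definition sigma_set :: "(nat \<Rightarrow> real) \<Rightarrow> complex set" where
  "sigma_set lam = insert 0 (range (\<lambda>k. complex_of_real ((lam k)\<^sup>2)))"

definition Phi :: "(nat \<Rightarrow> real) \<Rightarrow> (nat \<Rightarrow> real) \<Rightarrow> complex \<Rightarrow> complex" where
  "Phi lam mu z = (\<Prod>k. (z - complex_of_real ((mu k)\<^sup>2)) / (z - complex_of_real ((lam k)\<^sup>2)))"

definition Phi_props :: "(nat \<Rightarrow> real) \<Rightarrow> (nat \<Rightarrow> real) \<Rightarrow> (complex \<Rightarrow> complex) \<Rightarrow> bool" where
  "Phi_props lam mu f \<longleftrightarrow>
     f holomorphic_on (- sigma_set lam) \<and>
     (\<forall>z \<in> - sigma_set lam. f (cnj z) = cnj (f z)) \<and>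
     (\<forall>k. is_pole f (complex_of_real ((lam k)\<^sup>2)) \<and> zorder f (complex_of_real ((lam k)\<^sup>2)) = -1) \<and>
     (\<forall>z \<in> - sigma_set lam. f z = 0 \<longleftrightarrow> z \<in> range (\<lambda>k. complex_of_real ((mu k)\<^sup>2))) \<and>
     (\<forall>k. zorder f (complex_of_real ((mu k)\<^sup>2)) = 1) \<and>
     (f \<longlongrightarrow> 1) at_infinity \<and>
     (\<forall>z. Im z > 0 \<longrightarrow> Im (f z) < 0)"

end

theory Submission
  imports Defs
begin


definition fac :: "(nat \<Rightarrow> real) \<Rightarrow> (nat \<Rightarrow> real) \<Rightarrow> nat \<Rightarrow> complex \<Rightarrow> complex" where
  "fac lam mu k z = (z - complex_of_real ((mu k)\<^sup>2)) / (z - complex_of_real ((lam k)\<^sup>2))"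

lemma Phi_fac: "Phi lam mu z = (\<Prod>k. fac lam mu k z)"
  by (simp add: Phi_def fac_def)

lemma closed_sigma:
  assumes "lam \<longlonglongrightarrow> 0"
  shows "closed (sigma_set lam)"
proof -
  have "(\<lambda>k. complex_of_real ((lam k)\<^sup>2)) \<longlonglongrightarrow> complex_of_real (0\<^sup>2)"
    by (intro tendsto_intros assms)
  hence "compact (insert 0 (range (\<lambda>k. complex_of_real ((lam k)\<^sup>2))))"
    using compact_sequence_with_limit by fastforce
  thus ?thesis unfolding sigma_set_def by (rule compact_imp_closed)
qed

lemma A_in_sigma: "complex_of_real ((lam k)\<^sup>2) \<in> sigma_set lam"
  by (auto simp: sigma_set_def)

lemma A_in_sigma': "(complex_of_real (lam k))\<^sup>2 \<in> sigma_set lam"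
  using A_in_sigma[of lam k] by simp

lemma zero_in_sigma: "0 \<in> sigma_set lam"
  by (auto simp: sigma_set_def)

lemma core_prod:
  assumes summ: "summable (\<lambda>k. \<bar>(lam k)\<^sup>2 - (mu k)\<^sup>2\<bar>)"
    and cl: "closed (sigma_set lam)"
  shows "Phi lam mu holomorphic_on - sigma_set lam"
    and "\<And>z. z \<notin> sigma_set lam \<Longrightarrow> (\<lambda>k. fac lam mu k z) has_prod Phi lam mu z"
    and "\<And>z. z \<notin> sigma_set lam \<Longrightarrow> (\<lambda>n. \<Prod>k<n. fac lam mu k z) \<longlonglongrightarrow> Phi lam mu z"
proof -
  define S where "S = - sigma_set lam"
  have oS: "open S" using cl by (simp add: S_def open_Compl)
  have bound: "norm (fac lam mu k w - 1) \<le> \<bar>(lam k)\<^sup>2 - (mu k)\<^sup>2\<bar> / d"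
    if "d > 0" "norm (w - complex_of_real ((lam k)\<^sup>2)) \<ge> d" for k w d
  proof -
    have nz: "w - complex_of_real ((lam k)\<^sup>2) \<noteq> 0" using that by auto
    have "fac lam mu k w - 1 = complex_of_real ((lam k)\<^sup>2 - (mu k)\<^sup>2) / (w - complex_of_real ((lam k)\<^sup>2))"
      using nz by (simp add: fac_def field_simps)
    hence "norm (fac lam mu k w - 1) = \<bar>(lam k)\<^sup>2 - (mu k)\<^sup>2\<bar> / norm (w - complex_of_real ((lam k)\<^sup>2))"
      by (simp only: norm_divide norm_of_real)
    also have "\<dots> \<le> \<bar>(lam k)\<^sup>2 - (mu k)\<^sup>2\<bar> / d"
      using that by (intro divide_left_mono mult_pos_pos) auto
    finally show ?thesis .
  qed
  have conv: "convergent_prod (\<lambda>k. fac lam mu k z)" if "z \<in> S" for z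
  proof -
    obtain e where e: "e > 0" "ball z e \<subseteq> S" using oS \<open>z \<in> S\<close> open_contains_ball by blast
    have d: "norm (z - complex_of_real ((lam k)\<^sup>2)) \<ge> e" for k
    proof (rule ccontr)
      assume "\<not> ?thesis"
      hence "complex_of_real ((lam k)\<^sup>2) \<in> ball z e" by (simp add: dist_norm)
      thus False using e A_in_sigma[of lam k] by (auto simp: S_def)
    qed
    have "summable (\<lambda>k. norm (fac lam mu k z - 1))"
    proof (rule summable_comparison_test')
      show "summable (\<lambda>k. \<bar>(lam k)\<^sup>2 - (mu k)\<^sup>2\<bar> / e)" using summ by (rule summable_divide)
      show "norm (norm (fac lam mu k z - 1)) \<le> \<bar>(lam k)\<^sup>2 - (mu k)\<^sup>2\<bar> / e" for k
        using bound[OF e(1) d] by simp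
    qed
    thus ?thesis
      by (intro abs_convergent_prod_imp_convergent_prod summable_imp_abs_convergent_prod)
  qed
  have lim: "(\<lambda>n. \<Prod>k<n. fac lam mu k z) \<longlonglongrightarrow> Phi lam mu z" if "z \<in> S" for z
    using convergent_prod_LIMSEQ[OF conv[OF that]] LIMSEQ_lessThan_iff_atMost[of "\<lambda>A. \<Prod>k\<in>A. fac lam mu k z"]
    by (simp add: Phi_fac)
  show "(\<lambda>k. fac lam mu k z) has_prod Phi lam mu z" if "z \<notin> sigma_set lam" for z
    using convergent_prod_has_prod[OF conv] that by (simp add: S_def Phi_fac)
  show "(\<lambda>n. \<Prod>k<n. fac lam mu k z) \<longlonglongrightarrow> Phi lam mu z" if "z \<notin> sigma_set lam" for z
    using lim that by (simp add: S_def)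
  show "Phi lam mu holomorphic_on - sigma_set lam"
    unfolding S_def[symmetric]
  proof (rule holomorphic_uniform_sequence[OF oS])
    show "(\<lambda>w. \<Prod>k<n. fac lam mu k w) holomorphic_on S" for n
      unfolding fac_def
      by (intro holomorphic_intros) (auto simp: S_def A_in_sigma')
    fix z assume "z \<in> S"
    obtain e where e: "e > 0" "cball z (2*e) \<subseteq> S"
      using oS \<open>z \<in> S\<close> open_contains_cball by (metis field_sum_of_halves mult_2 half_gt_zero)
    have d: "norm (w - complex_of_real ((lam k)\<^sup>2)) \<ge> e" if "w \<in> cball z e" for k w
    proof (rule ccontr)
      assume "\<not> ?thesis"
      hence "dist z (complex_of_real ((lam k)\<^sup>2)) \<le> 2 * e"
        using that norm_triangle_ineq[of "z - w" "w - complex_of_real ((lam k)\<^sup>2)"]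
        by (simp add: dist_norm norm_minus_commute)
      thus False using e A_in_sigma[of lam k] by (auto simp: S_def)
    qed
    have uc: "uniformly_convergent_on (cball z e) (\<lambda>N w. \<Prod>k<N. fac lam mu k w)"
    proof (rule uniformly_convergent_on_prod')
      show "continuous_on (cball z e) (fac lam mu k)" for k
        unfolding fac_def
        proof (intro continuous_intros ballI)
        fix w assume "w \<in> cball z e"
        from d[OF this, of k] e show "w - complex_of_real ((lam k)\<^sup>2) \<noteq> 0" by auto
      qed
      show "compact (cball z e)" by simp
      show "uniformly_convergent_on (cball z e) (\<lambda>N w. \<Sum>k<N. norm (fac lam mu k w - 1))"
        by (rule Weierstrass_m_test'[of _ _ "\<lambda>k. \<bar>(lam k)\<^sup>2 - (mu k)\<^sup>2\<bar> / e"])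
           (use bound d e summ in \<open>auto intro: summable_divide\<close>)
    qed
    have sub: "cball z e \<subseteq> S" using e(2) subset_cball[of e "2*e" z] e(1) by auto
    have "uniform_limit (cball z e) (\<lambda>N w. \<Prod>k<N. fac lam mu k w) Phi_l sequentially"
      if "Phi_l = (\<lambda>w. lim (\<lambda>N. \<Prod>k<N. fac lam mu k w))" for Phi_l
      using uc that uniformly_convergent_uniform_limit_iff by blast
    moreover have "(\<lambda>w. lim (\<lambda>N. \<Prod>k<N. fac lam mu k w)) w = Phi lam mu w" if "w \<in> cball z e" for w
      proof -
      have "w \<in> S" using sub that by auto
      from limI[OF lim[OF this]] show ?thesis by simp
    qed
    ultimately have "uniform_limit (cball z e) (\<lambda>N w. \<Prod>k<N. fac lam mu k w) (Phi lam mu) sequentially"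
      by (metis (no_types, lifting) uniform_limit_cong')
    then show "\<exists>d>0. cball z d \<subseteq> S \<and> uniform_limit (cball z d) (\<lambda>N w. \<Prod>k<N. fac lam mu k w) (Phi lam mu) sequentially"
      using e sub by blast
  qed
qed


locale ilace =
  fixes lam mu :: "nat \<Rightarrow> real"
  assumes nz: "\<And>k. lam k \<noteq> 0" "\<And>k. mu k \<noteq> 0"
    and inter1: "\<And>k. \<bar>lam k\<bar> > \<bar>mu k\<bar>"
    and inter2: "\<And>k. \<bar>mu k\<bar> > \<bar>lam (Suc k)\<bar>"
    and lim: "lam \<longlonglongrightarrow> 0"
begin

lemma ab: "(mu k)\<^sup>2 < (lam k)\<^sup>2"
  using inter1[of k] by (rule power2_strict_mono)

lemma ba: "(lam (Suc k))\<^sup>2 < (mu k)\<^sup>2"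
  using inter2[of k] by (rule power2_strict_mono)

lemma apos: "(lam k)\<^sup>2 > 0" using nz by simp
lemma bpos: "(mu k)\<^sup>2 > 0" using nz by simp

lemma a_dec: "(lam (Suc k))\<^sup>2 < (lam k)\<^sup>2"
  using ab ba order.strict_trans by blast

lemma a_less: "k < j \<Longrightarrow> (lam j)\<^sup>2 < (lam k)\<^sup>2"
  using lift_Suc_mono_less[of "\<lambda>k. - (lam k)\<^sup>2"] a_dec by force

lemma a_le0: "(lam k)\<^sup>2 \<le> (lam 0)\<^sup>2"
  using a_less[of 0 k] by (cases k) auto

lemma b_le0: "(mu k)\<^sup>2 \<le> (lam 0)\<^sup>2"
  using a_le0[of k] ab[of k] by simp

lemma a_inj: "(lam j)\<^sup>2 = (lam k)\<^sup>2 \<longleftrightarrow> j = k"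
  using a_less[of j k] a_less[of k j] by (cases j k rule: linorder_cases) auto

lemma ab_ne: "(lam j)\<^sup>2 \<noteq> (mu k)\<^sup>2"
proof (cases j k rule: linorder_cases)
  case less
  hence "(lam k)\<^sup>2 \<le> (lam (Suc j))\<^sup>2" using a_less[of "Suc j" k] by (cases "Suc j = k") auto
  thus ?thesis using ab[of k] ba[of j] a_dec[of j] by simp
next
  case equal thus ?thesis using ab[of k] by simp
next
  case greater
  hence "(lam j)\<^sup>2 \<le> (lam (Suc k))\<^sup>2" using a_less[of "Suc k" j] by (cases "Suc k = j") auto
  thus ?thesis using ba[of k] by simp
qed

lemma b_less: "k < j \<Longrightarrow> (mu j)\<^sup>2 < (mu k)\<^sup>2"
proof -
  assume "k < j"
  hence "(lam j)\<^sup>2 \<le> (lam (Suc k))\<^sup>2" using a_less[of "Suc k" j] by (cases "Suc k = j") auto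
  thus ?thesis using ab[of j] ba[of k] by simp
qed

lemma b_inj: "(mu j)\<^sup>2 = (mu k)\<^sup>2 \<longleftrightarrow> j = k"
  using b_less[of j k] b_less[of k j] by (cases j k rule: linorder_cases) auto

lemma mu_lim: "mu \<longlonglongrightarrow> 0"
proof -
  have "(\<lambda>k. \<bar>lam k\<bar>) \<longlonglongrightarrow> 0" using tendsto_rabs_zero[OF lim] .
  hence "(\<lambda>k. \<bar>mu k\<bar>) \<longlonglongrightarrow> 0"
    by (rule Lim_null_comparison[rotated]) (use inter1 less_imp_le in \<open>auto intro: always_eventually\<close>)
  thus ?thesis by (simp add: tendsto_rabs_zero_iff)
qed

lemma summ: "summable (\<lambda>k. \<bar>(lam k)\<^sup>2 - (mu k)\<^sup>2\<bar>)"
proof (rule summable_comparison_test')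
  have "(\<lambda>k. (lam k)\<^sup>2) \<longlonglongrightarrow> 0\<^sup>2" by (intro tendsto_intros lim)
  hence "(\<lambda>k. (lam k)\<^sup>2 - (lam (Suc k))\<^sup>2) sums ((lam 0)\<^sup>2 - 0)"
    by (intro telescope_sums') simp
  thus "summable (\<lambda>k. (lam k)\<^sup>2 - (lam (Suc k))\<^sup>2)" by (rule sums_summable)
  show "norm \<bar>(lam k)\<^sup>2 - (mu k)\<^sup>2\<bar> \<le> (lam k)\<^sup>2 - (lam (Suc k))\<^sup>2" for k
    using ab[of k] ba[of k] by simp
qed

lemma closed_T: "closed (sigma_set lam \<union> sigma_set mu)"
  using closed_sigma[OF lim] closed_sigma[OF mu_lim] by blast

lemma closed_S: "closed (sigma_set lam)"
  using closed_sigma[OF lim] .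

lemmas Phi_core = core_prod[OF summ closed_S]

end


lemma fac_zero_iff:
  assumes "z \<noteq> complex_of_real ((lam k)\<^sup>2)"
  shows "fac lam mu k z = 0 \<longleftrightarrow> z = complex_of_real ((mu k)\<^sup>2)"
  using assms by (auto simp: fac_def simp del: of_real_power)

context ilace begin

lemma sigma_mod: "sigma_set (lam(j:=0)) = sigma_set lam - {complex_of_real ((lam j)\<^sup>2)}"
proof -
  have "(lam k)\<^sup>2 \<noteq> (lam j)\<^sup>2" if "k \<noteq> j" for k using a_inj that by blast
  moreover have "(lam j)\<^sup>2 \<noteq> 0" using apos[of j] by simp
  ultimately show ?thesis
  proof (intro equalityI subsetI)
    fix x assume "x \<in> sigma_set (lam(j:=0))"
    then consider "x = 0" | k where "k \<noteq> j" "x = complex_of_real ((lam k)\<^sup>2)"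
      unfolding sigma_set_def by (auto split: if_splits)
    thus "x \<in> sigma_set lam - {complex_of_real ((lam j)\<^sup>2)}"
    proof cases
      case 1 thus ?thesis using \<open>(lam j)\<^sup>2 \<noteq> 0\<close> by (auto simp: sigma_set_def simp del: of_real_power)
    next
      case 2 thus ?thesis using a_inj[of k j] by (auto simp: sigma_set_def simp del: of_real_power)
    qed
  next
    fix x assume "x \<in> sigma_set lam - {complex_of_real ((lam j)\<^sup>2)}"
    then consider "x = 0" | k where "k \<noteq> j" "x = complex_of_real ((lam k)\<^sup>2)"
      unfolding sigma_set_def by (auto simp del: of_real_power) metis
    thus "x \<in> sigma_set (lam(j:=0))"
    proof cases
      case 1 thus ?thesis by (simp add: zero_in_sigma)
    next
      case 2 thus ?thesis using A_in_sigma[of "lam(j:=0)" k] by simp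
    qed
  qed
qed

lemma lim_mod: "lam(j:=0) \<longlonglongrightarrow> 0"
proof -
  have "eventually (\<lambda>k. lam k = (lam(j:=0)) k) sequentially"
    using eventually_gt_at_top[of j] by eventually_elim auto
  with lim show ?thesis by (rule Lim_transform_eventually)
qed

lemma summ_mod: "summable (\<lambda>k. \<bar>((lam(j:=0)) k)\<^sup>2 - ((mu(j:=0)) k)\<^sup>2\<bar>)"
  by (rule summable_comparison_test'[OF summ]) auto

lemmas Phi_core_mod = core_prod[OF summ_mod closed_sigma[OF lim_mod]]

lemma Phi_split:
  assumes "z \<notin> sigma_set lam"
  shows "Phi lam mu z = fac lam mu j z * Phi (lam(j:=0)) (mu(j:=0)) z"
proof -
  have z0: "z \<noteq> 0" using assms zero_in_sigma by blast
  have "z \<notin> sigma_set (lam(j:=0))" using assms sigma_mod by auto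
  hence h1: "(\<lambda>k. fac (lam(j:=0)) (mu(j:=0)) k z) has_prod Phi (lam(j:=0)) (mu(j:=0)) z"
    by (rule Phi_core_mod(2))
  have h2: "(\<lambda>r. if r = j then fac lam mu r z else 1) has_prod fac lam mu j z"
    by (rule has_prod_single)
  have "(\<lambda>k. (if k = j then fac lam mu k z else 1) * fac (lam(j:=0)) (mu(j:=0)) k z) has_prod
          (fac lam mu j z * Phi (lam(j:=0)) (mu(j:=0)) z)"
    by (rule has_prod_mult[OF h2 h1])
  also have "(\<lambda>k. (if k = j then fac lam mu k z else 1) * fac (lam(j:=0)) (mu(j:=0)) k z) =
             (\<lambda>k. fac lam mu k z)"
    using z0 by (auto simp: fac_def)
  finally show ?thesis using Phi_core(2)[OF assms] has_prod_unique2 by blast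
qed

lemma Phi_zero_iff:
  assumes "z \<notin> sigma_set lam"
  shows "Phi lam mu z = 0 \<longleftrightarrow> z \<in> range (\<lambda>k. complex_of_real ((mu k)\<^sup>2))"
proof -
  have "Phi lam mu z = 0 \<longleftrightarrow> 0 \<in> range (\<lambda>k. fac lam mu k z)"
    by (rule has_prod_eq_0_iff[OF Phi_core(2)[OF assms]])
  also have "\<dots> \<longleftrightarrow> z \<in> range (\<lambda>k. complex_of_real ((mu k)\<^sup>2))"
  proof
    assume "0 \<in> range (\<lambda>k. fac lam mu k z)"
    then obtain k where k: "fac lam mu k z = 0" by auto
    have "z \<noteq> complex_of_real ((lam k)\<^sup>2)" using assms A_in_sigma by metis
    thus "z \<in> range (\<lambda>k. complex_of_real ((mu k)\<^sup>2))" using fac_zero_iff k by blast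
  next
    assume "z \<in> range (\<lambda>k. complex_of_real ((mu k)\<^sup>2))"
    then obtain k where k: "z = complex_of_real ((mu k)\<^sup>2)" by auto
    have "z \<noteq> complex_of_real ((lam k)\<^sup>2)" using assms A_in_sigma by metis
    hence "fac lam mu k z = 0" using fac_zero_iff k by blast
    thus "0 \<in> range (\<lambda>k. fac lam mu k z)" by (metis rangeI)
  qed
  finally show ?thesis .
qed

lemma Phi_mod_nz:
  assumes "z = complex_of_real ((lam j)\<^sup>2) \<or> z = complex_of_real ((mu j)\<^sup>2)"
  shows "Phi (lam(j:=0)) (mu(j:=0)) z \<noteq> 0"
proof -
  have z0: "z \<noteq> 0" using assms apos[of j] bpos[of j] by auto
  have zs: "z \<notin> sigma_set (lam(j:=0))"
  proof
    assume "z \<in> sigma_set (lam(j:=0))"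
    then consider "z = 0" | k where "k \<noteq> j" "z = complex_of_real ((lam k)\<^sup>2)"
      unfolding sigma_set_def by (auto split: if_splits)
    thus False
    proof cases
      case 1 thus False using z0 by simp
    next
      case 2
      thus False using assms a_inj[of j k] ab_ne[of k j] by (auto simp del: of_real_power)
    qed
  qed
  have "0 \<notin> range (\<lambda>k. fac (lam(j:=0)) (mu(j:=0)) k z)"
  proof
    assume "0 \<in> range (\<lambda>k. fac (lam(j:=0)) (mu(j:=0)) k z)"
    then obtain k where k: "fac (lam(j:=0)) (mu(j:=0)) k z = 0" by auto
    show False
    proof (cases "k = j")
      case True thus False using k z0 by (simp add: fac_def)
    next
      case False
      have "z \<noteq> complex_of_real (((lam(j:=0)) k)\<^sup>2)" using zs A_in_sigma by metis
      hence "z = complex_of_real ((mu k)\<^sup>2)" using k False fac_zero_iff[of z "lam(j:=0)" k "mu(j:=0)"] by simp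
      thus False using assms False ab_ne[of j k] b_inj[of j k] by (auto simp del: of_real_power)
    qed
  qed
  thus ?thesis using has_prod_eq_0_iff[OF Phi_core_mod(2)[OF zs]] by blast
qed

end


context ilace begin

lemma B_notin_sigma: "complex_of_real ((mu k)\<^sup>2) \<notin> sigma_set lam"
  using bpos[of k] ab_ne[of _ k] unfolding sigma_set_def
  by (auto simp del: of_real_power) (metis of_real_eq_iff)+

lemma sigma_insert: "sigma_set lam = insert (complex_of_real ((lam j)\<^sup>2)) (sigma_set (lam(j:=0)))"
  using sigma_mod[of j] A_in_sigma[of lam j] by auto

lemma Phi_pole_local:
  obtains r g where "r > 0" "ball (complex_of_real ((lam j)\<^sup>2)) r \<subseteq> - sigma_set (lam(j:=0))"
    "g holomorphic_on ball (complex_of_real ((lam j)\<^sup>2)) r"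
    "g (complex_of_real ((lam j)\<^sup>2)) \<noteq> 0"
    "\<And>w. w \<in> ball (complex_of_real ((lam j)\<^sup>2)) r - {complex_of_real ((lam j)\<^sup>2)} \<Longrightarrow>
        Phi lam mu w = g w / (w - complex_of_real ((lam j)\<^sup>2))"
proof -
  define p where "p = complex_of_real ((lam j)\<^sup>2)"
  define q where "q = complex_of_real ((mu j)\<^sup>2)"
  define Q where "Q = Phi (lam(j:=0)) (mu(j:=0))"
  have op: "open (- sigma_set (lam(j:=0)))" using closed_sigma[OF lim_mod] by auto
  have "p \<notin> sigma_set (lam(j:=0))" using sigma_mod[of j] by (auto simp: p_def)
  then obtain r where r: "r > 0" "ball p r \<subseteq> - sigma_set (lam(j:=0))"
    using op open_contains_ball by blast
  define g where "g = (\<lambda>w. (w - q) * Q w)"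
  have "g holomorphic_on ball p r"
    unfolding g_def Q_def
    by (intro holomorphic_intros holomorphic_on_subset[OF Phi_core_mod(1)] r)
  moreover have "g p \<noteq> 0"
    using Phi_mod_nz[of p j] ab_ne[of j j] by (auto simp: g_def Q_def p_def q_def simp del: of_real_power)
  moreover have "Phi lam mu w = g w / (w - p)" if "w \<in> ball p r - {p}" for w
  proof -
    have "w \<notin> sigma_set lam" using that r sigma_insert[of j] by (auto simp: p_def)
    from Phi_split[OF this, of j] show ?thesis
      by (simp add: g_def Q_def fac_def p_def q_def)
  qed
  ultimately show ?thesis using that r unfolding p_def by blast
qed

lemma Phi_pole: "is_pole (Phi lam mu) (complex_of_real ((lam j)\<^sup>2))"
  and Phi_pole_order: "zorder (Phi lam mu) (complex_of_real ((lam j)\<^sup>2)) = -1"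
proof -
  define p where "p = complex_of_real ((lam j)\<^sup>2)"
  obtain r g where r: "r > 0" "ball p r \<subseteq> - sigma_set (lam(j:=0))"
    "g holomorphic_on ball p r" "g p \<noteq> 0"
    "\<And>w. w \<in> ball p r - {p} \<Longrightarrow> Phi lam mu w = g w / (w - p)"
    using Phi_pole_local[of j] unfolding p_def by blast
  have "is_pole (\<lambda>w. g w / (w - p) ^ 1) p"
    by (rule is_pole_basic[OF r(3)]) (use r in auto)
  moreover have "eventually (\<lambda>w. g w / (w - p) ^ 1 = Phi lam mu w) (at p)"
  proof -
    have "eventually (\<lambda>w. w \<in> ball p r - {p}) (at p)"
      using r(1) by (intro eventually_at_in_open) auto
    thus ?thesis by eventually_elim (use r in auto)
  qed
  ultimately show "is_pole (Phi lam mu) (complex_of_real ((lam j)\<^sup>2))"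
    unfolding p_def[symmetric] using is_pole_transform by blast
  have "zorder (Phi lam mu) p = -1"
  proof (rule zorder_eqI[OF _ _ r(3) r(4)])
    show "Phi lam mu w = g w * (w - p) powi - 1" if "w \<in> ball p r" "w \<noteq> p" for w
      using r(5)[of w] that by (simp add: power_int_minus divide_inverse)
  qed (use r in auto)
  thus "zorder (Phi lam mu) (complex_of_real ((lam j)\<^sup>2)) = -1" by (simp add: p_def)
qed

lemma Phi_zero_local:
  obtains r g where "r > 0" "ball (complex_of_real ((mu j)\<^sup>2)) r \<subseteq> - sigma_set lam"
    "g holomorphic_on ball (complex_of_real ((mu j)\<^sup>2)) r"
    "g (complex_of_real ((mu j)\<^sup>2)) \<noteq> 0"
    "\<And>w. w \<in> ball (complex_of_real ((mu j)\<^sup>2)) r \<Longrightarrow>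
        Phi lam mu w = g w * (w - complex_of_real ((mu j)\<^sup>2))"
proof -
  define p where "p = complex_of_real ((lam j)\<^sup>2)"
  define q where "q = complex_of_real ((mu j)\<^sup>2)"
  define Q where "Q = Phi (lam(j:=0)) (mu(j:=0))"
  have op: "open (- sigma_set lam)" using closed_S by auto
  have "q \<notin> sigma_set lam" using B_notin_sigma by (simp add: q_def)
  then obtain r where r: "r > 0" "ball q r \<subseteq> - sigma_set lam"
    using op open_contains_ball by blast
  have pn: "p \<notin> ball q r" using r A_in_sigma[of lam j] by (auto simp: p_def)
  define g where "g = (\<lambda>w. Q w / (w - p))"
  have sub: "ball q r \<subseteq> - sigma_set (lam(j:=0))" using r sigma_mod[of j] by auto
  have "g holomorphic_on ball q r"
    unfolding g_def Q_def
    by (intro holomorphic_intros holomorphic_on_subset[OF Phi_core_mod(1)] sub) (use pn in auto)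
  moreover have "g q \<noteq> 0"
    using Phi_mod_nz[of q j] ab_ne[of j j] by (auto simp: g_def Q_def p_def q_def simp del: of_real_power)
  moreover have "Phi lam mu w = g w * (w - q)" if "w \<in> ball q r" for w
  proof -
    have "w \<notin> sigma_set lam" using that r by auto
    from Phi_split[OF this, of j] show ?thesis
      by (simp add: g_def Q_def fac_def p_def q_def)
  qed
  ultimately show ?thesis using that r unfolding q_def by blast
qed

lemma Phi_zero_order: "zorder (Phi lam mu) (complex_of_real ((mu j)\<^sup>2)) = 1"
proof -
  define q where "q = complex_of_real ((mu j)\<^sup>2)"
  obtain r g where r: "r > 0" "ball q r \<subseteq> - sigma_set lam"
    "g holomorphic_on ball q r" "g q \<noteq> 0"
    "\<And>w. w \<in> ball q r \<Longrightarrow> Phi lam mu w = g w * (w - q)"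
    using Phi_zero_local[of j] unfolding q_def by blast
  have "zorder (Phi lam mu) q = 1"
    by (rule zorder_eqI[OF _ _ r(3) r(4)]) (use r in auto)
  thus ?thesis by (simp add: q_def)
qed

end


lemma fac_bound:
  assumes "d > 0" "norm (w - complex_of_real ((lam k)\<^sup>2)) \<ge> d"
  shows "norm (fac lam mu k w - 1) \<le> \<bar>(lam k)\<^sup>2 - (mu k)\<^sup>2\<bar> / d"
proof -
  have nz: "w - complex_of_real ((lam k)\<^sup>2) \<noteq> 0" using assms by auto
  have "fac lam mu k w - 1 = complex_of_real ((lam k)\<^sup>2 - (mu k)\<^sup>2) / (w - complex_of_real ((lam k)\<^sup>2))"
    using nz by (simp add: fac_def field_simps)
  hence "norm (fac lam mu k w - 1) = \<bar>(lam k)\<^sup>2 - (mu k)\<^sup>2\<bar> / norm (w - complex_of_real ((lam k)\<^sup>2))"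
    by (simp only: norm_divide norm_of_real)
  also have "\<dots> \<le> \<bar>(lam k)\<^sup>2 - (mu k)\<^sup>2\<bar> / d"
    using assms by (intro divide_left_mono mult_pos_pos) auto
  finally show ?thesis .
qed

lemma sigma_cnj: "x \<in> sigma_set lam \<Longrightarrow> cnj x = x"
  unfolding sigma_set_def by (auto simp del: of_real_power)

context ilace begin

lemma Phi_cnj:
  assumes "z \<notin> sigma_set lam"
  shows "Phi lam mu (cnj z) = cnj (Phi lam mu z)"
proof -
  have cz: "cnj z \<notin> sigma_set lam"
    using assms sigma_cnj[of "cnj z" lam] by auto
  have "(\<lambda>n. cnj (\<Prod>k<n. fac lam mu k z)) \<longlonglongrightarrow> cnj (Phi lam mu z)"
    by (intro tendsto_intros Phi_core(3) assms)
  moreover have "(\<lambda>n. cnj (\<Prod>k<n. fac lam mu k z)) = (\<lambda>n. \<Prod>k<n. fac lam mu k (cnj z))"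
    by (simp add: fac_def)
  ultimately show ?thesis using Phi_core(3)[OF cz] LIMSEQ_unique by metis
qed

lemma sigma_norm: "x \<in> sigma_set lam \<Longrightarrow> norm x \<le> (lam 0)\<^sup>2"
  unfolding sigma_set_def using a_le0 by (auto simp del: of_real_power)

lemma Phi_lim_inf: "(Phi lam mu \<longlongrightarrow> 1) at_infinity"
proof -
  define a0 where "a0 = (lam 0)\<^sup>2"
  define C where "C = (\<Sum>k. \<bar>(lam k)\<^sup>2 - (mu k)\<^sup>2\<bar>)"
  have bnd: "norm (Phi lam mu z - 1) \<le> exp (C / (norm z / 2)) - 1" if z: "norm z \<ge> 2 * a0 + 1" for z
  proof -
    have a0: "a0 \<ge> 0" by (simp add: a0_def)
    define d where "d = norm z / 2"
    have d: "d > 0" using z a0 by (simp add: d_def) (metis norm_zero not_one_le_zero add_nonneg_nonneg mult_nonneg_nonneg zero_le_numeral order.trans add_increasing2 le_add_same_cancel2)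
    have dist: "norm (z - complex_of_real ((lam k)\<^sup>2)) \<ge> d" for k
    proof -
      have "norm (complex_of_real ((lam k)\<^sup>2)) \<le> a0"
        using sigma_norm[OF A_in_sigma[of lam k]] by (simp add: a0_def del: of_real_power)
      thus ?thesis using norm_triangle_ineq2[of z "complex_of_real ((lam k)\<^sup>2)"] z
        by (simp add: d_def del: of_real_power)
    qed
    have zs: "z \<notin> sigma_set lam"
    proof
      assume "z \<in> sigma_set lam"
      from sigma_norm[OF this] z a0 show False unfolding a0_def by linarith
    qed
    have "norm ((\<Prod>k<n. fac lam mu k z) - 1) \<le> exp (C / d) - 1" for n
    proof -
      have "norm ((\<Prod>k<n. 1 + (fac lam mu k z - 1)) - 1) \<le> (\<Prod>k<n. 1 + norm (fac lam mu k z - 1)) - 1"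
        by (rule norm_prod_minus1_le_prod_minus1)
      also have "(\<Prod>k<n. 1 + norm (fac lam mu k z - 1)) \<le> exp (\<Sum>k<n. norm (fac lam mu k z - 1))"
        by (rule prod_le_exp_sum) auto
      also have "(\<Sum>k<n. norm (fac lam mu k z - 1)) \<le> (\<Sum>k<n. \<bar>(lam k)\<^sup>2 - (mu k)\<^sup>2\<bar> / d)"
        by (intro sum_mono fac_bound d dist)
      also have "\<dots> = (\<Sum>k<n. \<bar>(lam k)\<^sup>2 - (mu k)\<^sup>2\<bar>) / d"
        by (simp add: sum_divide_distrib)
      also have "(\<Sum>k<n. \<bar>(lam k)\<^sup>2 - (mu k)\<^sup>2\<bar>) \<le> C"
        unfolding C_def by (intro sum_le_suminf summ) auto
      finally show ?thesis using d by (simp add: divide_right_mono)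
    qed
    moreover have "(\<lambda>n. norm ((\<Prod>k<n. fac lam mu k z) - 1)) \<longlonglongrightarrow> norm (Phi lam mu z - 1)"
      by (intro tendsto_intros Phi_core(3) zs)
    ultimately show ?thesis unfolding d_def by (intro LIMSEQ_le_const2) auto
  qed
  have inf: "LIM z at_infinity. norm (z::complex) / 2 :> at_infinity"
  proof -
    have "filterlim (\<lambda>z::complex. norm z) at_top at_infinity" by (rule filterlim_norm_at_top)
    hence "filterlim (\<lambda>z::complex. norm z / 2) at_top at_infinity"
      by (rule filterlim_tendsto_pos_mult_at_top[OF tendsto_const, of "1/2", simplified, rotated])
    thus ?thesis by (rule filterlim_at_top_imp_at_infinity)
  qed
  have "((\<lambda>z::complex. C / (norm z / 2)) \<longlongrightarrow> 0) at_infinity"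
    by (rule tendsto_divide_0[OF tendsto_const inf])
  hence "((\<lambda>z::complex. exp (C / (norm z / 2)) - 1) \<longlongrightarrow> exp 0 - 1) at_infinity"
    by (intro tendsto_intros)
  hence lim0: "((\<lambda>z::complex. exp (C / (norm z / 2)) - 1) \<longlongrightarrow> 0) at_infinity" by simp
  have "((\<lambda>z. Phi lam mu z - 1) \<longlongrightarrow> 0) at_infinity"
  proof (rule Lim_null_comparison[OF _ lim0])
    have "eventually (\<lambda>z::complex. norm z \<ge> 2 * (lam 0)\<^sup>2 + 1) at_infinity"
      by (simp add: eventually_at_infinity) blast
    thus "eventually (\<lambda>z. norm (Phi lam mu z - 1) \<le> exp (C / (norm z / 2)) - 1) at_infinity"
      by eventually_elim (rule bnd, simp add: a0_def)
  qed
  thus ?thesis by (simp add: LIM_zero_iff)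
qed

end


definition theta :: "complex \<Rightarrow> real \<Rightarrow> real" where
  "theta z x = pi/2 - arctan ((Re z - x) / Im z)"

lemma theta_polar:
  assumes "Im z > 0"
  shows "z - complex_of_real x = complex_of_real (cmod (z - complex_of_real x)) * cis (theta z x)"
proof -
  define t where "t = (Re z - x) / Im z"
  define s where "s = sqrt (1 + t\<^sup>2)"
  have s: "s > 0" by (simp add: s_def add_pos_nonneg)
  have rx: "Re z - x = Im z * t" using assms by (simp add: t_def)
  have "cmod (z - complex_of_real x) = sqrt ((Re z - x)\<^sup>2 + (Im z)\<^sup>2)"
    by (simp add: cmod_def)
  also have "(Re z - x)\<^sup>2 + (Im z)\<^sup>2 = (Im z)\<^sup>2 * (1 + t\<^sup>2)"
    by (simp add: rx power_mult_distrib algebra_simps)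
  also have "sqrt \<dots> = Im z * s"
    using assms by (simp add: real_sqrt_mult s_def)
  finally have n: "cmod (z - complex_of_real x) = Im z * s" .
  have c: "cos (theta z x) = t / s" and sn: "sin (theta z x) = 1 / s"
    by (simp_all add: theta_def cos_diff sin_diff sin_arctan cos_arctan t_def s_def)
  show ?thesis
    using s rx by (intro complex_eqI) (simp_all add: n c sn)
qed

lemma theta_bounds: "Im z > 0 \<Longrightarrow> 0 < theta z x \<and> theta z x < pi"
  using arctan_lbound[of "(Re z - x) / Im z"] arctan_ubound[of "(Re z - x) / Im z"]
  by (simp add: theta_def)

lemma theta_mono:
  assumes "Im z > 0" "x < y"
  shows "theta z x < theta z y"
proof -
  have "(Re z - y) / Im z < (Re z - x) / Im z"
    using assms by (intro divide_strict_right_mono) auto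
  thus ?thesis by (simp add: theta_def arctan_less_iff)
qed

context ilace begin

lemma Phi_Im_neg:
  assumes z: "Im z > 0"
  shows "Im (Phi lam mu z) < 0"
proof -
  define th where "th = theta z"
  define r where "r = (\<lambda>x::real. cmod (z - complex_of_real x))"
  define a where "a = (\<lambda>k. (lam k)\<^sup>2)"
  define b where "b = (\<lambda>k. (mu k)\<^sup>2)"
  have rpos: "r x > 0" for x using z by (auto simp: r_def)
  have zs: "z \<notin> sigma_set lam" using sigma_cnj[of z lam] z by (auto simp: complex_eq_iff)
  define R where "R = (\<lambda>n. \<Prod>k<n. r (b k) / r (a k))"
  define S where "S = (\<lambda>n. \<Sum>k<n. th (b k) - th (a k))"
  have fac_polar: "fac lam mu k z = complex_of_real (r (b k) / r (a k)) * cis (th (b k) - th (a k))" for k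
  proof -
    have "fac lam mu k z = (complex_of_real (r (b k)) * cis (th (b k))) / (complex_of_real (r (a k)) * cis (th (a k)))"
      unfolding fac_def r_def th_def a_def b_def using theta_polar[OF z] by metis
    also have "\<dots> = complex_of_real (r (b k) / r (a k)) * cis (th (b k) - th (a k))"
      by (simp add: cis_divide[symmetric] field_simps)
    finally show ?thesis .
  qed
  have P: "(\<Prod>k<n. fac lam mu k z) = complex_of_real (R n) * cis (S n)" for n
  proof (induction n)
    case 0 show ?case by (simp add: R_def S_def)
  next
    case (Suc n)
    have "(\<Prod>k<Suc n. fac lam mu k z) = complex_of_real (R n) * cis (S n) * fac lam mu n z"
      using Suc by simp
    also have "\<dots> = complex_of_real (R n * (r (b n) / r (a n))) * (cis (S n) * cis (th (b n) - th (a n)))"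
      by (simp add: fac_polar)
    also have "\<dots> = complex_of_real (R (Suc n)) * cis (S (Suc n))"
      by (simp add: cis_mult R_def S_def)
    finally show ?case .
  qed
  have Rpos: "R n > 0" for n unfolding R_def using rpos by (intro prod_pos) (auto intro: divide_pos_pos)
  have thmo: "x < y \<Longrightarrow> th x < th y" for x y using theta_mono[OF z] by (simp add: th_def)
  have thb: "0 < th x \<and> th x < pi" for x using theta_bounds[OF z] by (simp add: th_def)
  have Sdec: "S (Suc n) \<le> S n" for n
    using thmo[of "b n" "a n"] ab[of n] by (simp add: S_def a_def b_def)
  have Slow: "S (Suc n) \<ge> th (b n) - th (a 0)" for n
  proof (induction n)
    case 0 show ?case by (simp add: S_def)
  next
    case (Suc n)
    have "th (a (Suc n)) < th (b n)" using thmo ba[of n] by (simp add: a_def b_def)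
    thus ?case using Suc by (simp add: S_def)
  qed
  define L0 where "L0 = th 0 - th (a 0)"
  have SL: "S n \<ge> L0" for n
  proof (cases n)
    case 0 thus ?thesis using thmo[of 0 "a 0"] apos[of 0] by (simp add: S_def L0_def a_def)
  next
    case (Suc m)
    have "th 0 < th (b m)" using thmo bpos[of m] by (simp add: b_def)
    thus ?thesis using Slow[of m] Suc by (simp add: L0_def)
  qed
  have S0: "S n \<le> 0" for n
  proof (induction n)
    case (Suc n) thus ?case using Sdec[of n] by linarith
  qed (simp add: S_def)
  have dec: "decseq S" using Sdec by (simp add: decseq_SucI)
  have "Bseq S"
  proof (rule BseqI'[of _ "\<bar>L0\<bar>"])
    show "norm (S n) \<le> \<bar>L0\<bar>" for n using SL[of n] S0[of n] by simp
  qed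
  moreover have "monoseq S" using dec by (simp add: decseq_imp_monoseq)
  ultimately have "convergent S" by (rule Bseq_monoseq_convergent)
  then obtain Sinf where Sinf: "S \<longlonglongrightarrow> Sinf" by (auto simp: convergent_def)
  have "Sinf \<ge> L0" using Sinf SL by (intro LIMSEQ_le_const) auto
  moreover have "Sinf \<le> S 1"
    using Sinf dec by (intro LIMSEQ_le_const2) (auto simp: decseq_def)
  moreover have "S 1 < 0" using thmo[of "b 0" "a 0"] ab[of 0] by (simp add: S_def a_def b_def)
  moreover have "L0 > - pi" using thb[of 0] thb[of "a 0"] by (simp add: L0_def)
  ultimately have Sr: "- pi < Sinf" "Sinf < 0" by linarith+
  have lim1: "(\<lambda>n. complex_of_real (R n) * cis (S n)) \<longlonglongrightarrow> Phi lam mu z"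
    using Phi_core(3)[OF zs] by (simp add: P)
  have "(\<lambda>n. cmod (complex_of_real (R n) * cis (S n))) \<longlonglongrightarrow> cmod (Phi lam mu z)"
    by (rule tendsto_norm[OF lim1])
  moreover have "(\<lambda>n. cmod (complex_of_real (R n) * cis (S n))) = R"
    using Rpos by (simp add: norm_mult less_imp_le)
  ultimately have "R \<longlonglongrightarrow> cmod (Phi lam mu z)" by simp
  hence "(\<lambda>n. complex_of_real (R n) * cis (S n)) \<longlonglongrightarrow> complex_of_real (cmod (Phi lam mu z)) * cis Sinf"
    by (intro tendsto_intros Sinf)
  hence eq: "Phi lam mu z = complex_of_real (cmod (Phi lam mu z)) * cis Sinf"
    using lim1 LIMSEQ_unique by blast
  have "Phi lam mu z \<noteq> 0"
  proof
    assume "Phi lam mu z = 0"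
    then obtain k where "z = complex_of_real ((mu k)\<^sup>2)" using Phi_zero_iff[OF zs] by auto
    thus False using z by simp
  qed
  hence "cmod (Phi lam mu z) > 0" by simp
  moreover have "sin Sinf < 0" using sin_gt_zero[of "- Sinf"] Sr by simp
  ultimately have "Im (complex_of_real (cmod (Phi lam mu z)) * cis Sinf) < 0"
    by (simp add: mult_pos_neg)
  thus ?thesis using eq by simp
qed

end


lemma sigma_mod_gen:
  assumes "\<And>k. k \<noteq> j \<Longrightarrow> (x k)\<^sup>2 \<noteq> (x j)\<^sup>2" "x j \<noteq> 0"
  shows "sigma_set (x(j:=0)) = sigma_set x - {complex_of_real ((x j)\<^sup>2)}"
proof (intro equalityI subsetI)
  fix y assume "y \<in> sigma_set (x(j:=0))"
  then consider "y = 0" | k where "k \<noteq> j" "y = complex_of_real ((x k)\<^sup>2)"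
    unfolding sigma_set_def by (auto split: if_splits)
  thus "y \<in> sigma_set x - {complex_of_real ((x j)\<^sup>2)}"
  proof cases
    case 1 thus ?thesis using assms(2) by (auto simp: sigma_set_def simp del: of_real_power)
  next
    case 2 thus ?thesis using assms(1)[of k] by (auto simp: sigma_set_def simp del: of_real_power)
  qed
next
  fix y assume "y \<in> sigma_set x - {complex_of_real ((x j)\<^sup>2)}"
  then consider "y = 0" | k where "k \<noteq> j" "y = complex_of_real ((x k)\<^sup>2)"
    unfolding sigma_set_def by (auto simp del: of_real_power) metis
  thus "y \<in> sigma_set (x(j:=0))"
  proof cases
    case 1 thus ?thesis by (simp add: zero_in_sigma)
  next
    case 2 thus ?thesis using A_in_sigma[of "x(j:=0)" k] by simp
  qed
qed

lemma lim_mod_gen: "x \<longlonglongrightarrow> 0 \<Longrightarrow> x(j:=0) \<longlonglongrightarrow> 0"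
proof -
  assume x: "x \<longlonglongrightarrow> 0"
  have "eventually (\<lambda>k. x k = (x(j:=0)) k) sequentially"
    using eventually_gt_at_top[of j] by eventually_elim auto
  with x show ?thesis by (rule Lim_transform_eventually)
qed

lemma closed_avoid_ball:
  assumes "closed X" "p \<notin> X"
  obtains r where "r > 0" "\<And>w. w \<in> ball p r \<Longrightarrow> w \<notin> X"
proof -
  have "open (-X)" "p \<in> -X" using assms by auto
  then obtain r where "r > 0" "ball p r \<subseteq> -X" using open_contains_ball by blast
  thus ?thesis using that by blast
qed

lemma removable_ratio:
  fixes q h g :: "complex \<Rightarrow> complex"
  assumes "r > 0" "q holomorphic_on ball p r - {p}" "isCont h p" "isCont g p" "h p \<noteq> 0" "g p \<noteq> 0"
    "\<And>w. w \<in> ball p r - {p} \<Longrightarrow> q w = h w / g w"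
  shows "remove_sings q analytic_on {p}" "remove_sings q p \<noteq> 0"
proof -
  have iso: "isolated_singularity_at q p"
    by (rule isolated_singularity_at_holomorphic[OF assms(2)]) (use assms in auto)
  have "((\<lambda>w. h w / g w) \<longlongrightarrow> h p / g p) (at p)"
    using assms by (intro tendsto_intros) (auto simp: isCont_def)
  moreover have "eventually (\<lambda>w. h w / g w = q w) (at p)"
  proof -
    have "eventually (\<lambda>w. w \<in> ball p r - {p}) (at p)"
      using assms(1) by (intro eventually_at_in_open) auto
    thus ?thesis by eventually_elim (use assms in auto)
  qed
  ultimately have lim: "(q \<longlongrightarrow> h p / g p) (at p)" by (rule Lim_transform_eventually)
  show "remove_sings q analytic_on {p}" by (rule remove_sings_analytic_at[OF iso lim])
  show "remove_sings q p \<noteq> 0" using remove_sings_eqI[OF lim] assms by simp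
qed

lemma real_limit_Im:
  fixes G :: "complex \<Rightarrow> complex"
  assumes "isCont G (complex_of_real t)" "r > 0"
    "\<And>s. 0 < s \<Longrightarrow> s < r \<Longrightarrow> Im (G (complex_of_real (t + s))) = 0"
  shows "Im (G (complex_of_real t)) = 0"
proof -
  define x where "x = (\<lambda>n::nat. complex_of_real (t + r / (2 + real n)))"
  have "(\<lambda>n. r / (2 + real n)) \<longlonglongrightarrow> 0"
    by (intro tendsto_divide_0[OF tendsto_const] filterlim_at_top_imp_at_infinity
              filterlim_tendsto_add_at_top[OF tendsto_const] filterlim_real_sequentially)
  hence "x \<longlonglongrightarrow> complex_of_real (t + 0)" unfolding x_def by (intro tendsto_intros)
  hence "(\<lambda>n. G (x n)) \<longlonglongrightarrow> G (complex_of_real t)"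
    using assms(1) isCont_tendsto_compose by fastforce
  hence "(\<lambda>n. Im (G (x n))) \<longlonglongrightarrow> Im (G (complex_of_real t))" by (rule tendsto_Im)
  moreover have "Im (G (x n)) = 0" for n
  proof -
    have "r / (2 + real n) < r" using assms(2) by (simp add: field_simps add_pos_nonneg)
    thus ?thesis unfolding x_def using assms(2) by (intro assms(3)) auto
  qed
  ultimately show ?thesis by (simp add: LIMSEQ_const_iff)
qed

lemma csqrt_Re_pos: "z \<notin> \<real>\<^sub>\<le>\<^sub>0 \<Longrightarrow> Re (csqrt z) > 0"
proof (rule ccontr)
  assume z: "z \<notin> \<real>\<^sub>\<le>\<^sub>0" and "\<not> Re (csqrt z) > 0"
  hence r0: "Re (csqrt z) = 0" using Re_csqrt[of z] by simp
  have "z = (csqrt z)\<^sup>2" by simp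
  also have "\<dots> = - (Im (csqrt z))\<^sup>2"
    using r0 by (simp add: power2_eq_square complex_eq_iff)
  finally have "Re z \<le> 0 \<and> Im z = 0" by (metis Im_complex_of_real Re_complex_of_real neg_le_0_iff_le of_real_minus zero_le_power2 of_real_power)
  thus False using z by (simp add: complex_nonpos_Reals_iff)
qed

context ilace begin

theorem Phi_has_props: "Phi_props lam mu (Phi lam mu)"
  unfolding Phi_props_def
  using Phi_core(1) Phi_cnj Phi_pole Phi_pole_order Phi_zero_iff Phi_zero_order Phi_lim_inf Phi_Im_neg
  by auto

end


context ilace begin

lemma T_cases:
  assumes "p \<in> sigma_set lam \<union> sigma_set mu" "p \<noteq> 0"
  obtains j where "p = complex_of_real ((lam j)\<^sup>2)" | j where "p = complex_of_real ((mu j)\<^sup>2)"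
  using assms unfolding sigma_set_def by (auto simp del: of_real_power)

lemma T_real: "p \<in> sigma_set lam \<union> sigma_set mu \<Longrightarrow> Im p = 0"
  using sigma_cnj[of p lam] sigma_cnj[of p mu] by (auto simp: complex_eq_iff)

lemma T_norm: "p \<in> sigma_set lam \<union> sigma_set mu \<Longrightarrow> norm p \<le> (lam 0)\<^sup>2"
  using sigma_norm[of p] b_le0 unfolding sigma_set_def by (auto simp del: of_real_power)

lemma T_isolated:
  assumes "p \<in> sigma_set lam \<union> sigma_set mu" "p \<noteq> 0"
  obtains r where "r > 0" "\<And>w. w \<in> ball p r \<Longrightarrow> w \<in> sigma_set lam \<union> sigma_set mu \<Longrightarrow> w = p"
proof -
  from assms show ?thesis
  proof (cases rule: T_cases)
    case (1 j)
    define T' where "T' = sigma_set (lam(j:=0)) \<union> sigma_set mu"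
    have cl: "closed T'" unfolding T'_def using closed_sigma[OF lim_mod] closed_sigma[OF mu_lim] by blast
    have "p \<notin> sigma_set (lam(j:=0))" using sigma_mod[of j] 1 by auto
    moreover have "p \<notin> sigma_set mu"
      using 1 apos[of j] ab_ne[of j] unfolding sigma_set_def by (auto simp del: of_real_power)
    ultimately have "p \<notin> T'" by (simp add: T'_def)
    then obtain r where r: "r > 0" "\<And>w. w \<in> ball p r \<Longrightarrow> w \<notin> T'" using closed_avoid_ball[OF cl] by blast
    have "sigma_set lam \<union> sigma_set mu \<subseteq> insert p T'"
      using sigma_insert[of j] 1 by (auto simp: T'_def)
    thus ?thesis using that r by blast
  next
    case (2 j)
    define T' where "T' = sigma_set lam \<union> sigma_set (mu(j:=0))"
    have cl: "closed T'" unfolding T'_def using closed_sigma[OF lim] closed_sigma[OF lim_mod_gen[OF mu_lim]] by blast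
    have sm: "sigma_set (mu(j:=0)) = sigma_set mu - {p}"
      using sigma_mod_gen[of j mu] b_inj nz(2)[of j] 2 by auto
    have "p \<notin> T'" using B_notin_sigma 2 sm by (auto simp: T'_def)
    then obtain r where r: "r > 0" "\<And>w. w \<in> ball p r \<Longrightarrow> w \<notin> T'" using closed_avoid_ball[OF cl] by blast
    have "sigma_set lam \<union> sigma_set mu \<subseteq> insert p T'"
      using sm by (auto simp: T'_def)
    thus ?thesis using that r by blast
  qed
qed

end


locale uniq = ilace +
  fixes f :: "complex \<Rightarrow> complex"
  assumes fp: "Phi_props lam mu f"
begin

lemma f_holo: "f holomorphic_on - sigma_set lam" using fp unfolding Phi_props_def by blast
lemma f_cnj: "z \<notin> sigma_set lam \<Longrightarrow> f (cnj z) = cnj (f z)" using fp unfolding Phi_props_def by blast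
lemma f_pole: "is_pole f (complex_of_real ((lam k)\<^sup>2))" using fp unfolding Phi_props_def by blast
lemma f_pole_ord: "zorder f (complex_of_real ((lam k)\<^sup>2)) = -1" using fp unfolding Phi_props_def by blast
lemma f_zero: "z \<notin> sigma_set lam \<Longrightarrow> f z = 0 \<longleftrightarrow> z \<in> range (\<lambda>k. complex_of_real ((mu k)\<^sup>2))"
  using fp unfolding Phi_props_def by blast
lemma f_zord: "zorder f (complex_of_real ((mu k)\<^sup>2)) = 1" using fp unfolding Phi_props_def by blast
lemma f_lim: "(f \<longlongrightarrow> 1) at_infinity" using fp unfolding Phi_props_def by blast
lemma f_im: "Im z > 0 \<Longrightarrow> Im (f z) < 0" using fp unfolding Phi_props_def by blast

definition T where "T = sigma_set lam \<union> sigma_set mu"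
definition q where "q = (\<lambda>w. f w / Phi lam mu w)"
definition G where "G = remove_sings q"

lemma sig_T: "sigma_set lam \<subseteq> T" by (auto simp: T_def)
lemma B_T: "complex_of_real ((mu k)\<^sup>2) \<in> T" using A_in_sigma[of mu k] by (auto simp: T_def)
lemma rangeB_T: "range (\<lambda>k. complex_of_real ((mu k)\<^sup>2)) \<subseteq> T" using B_T by auto

lemma Phi_nz: "w \<notin> T \<Longrightarrow> Phi lam mu w \<noteq> 0"
  using Phi_zero_iff[of w] sig_T rangeB_T by blast
lemma f_nz: "w \<notin> T \<Longrightarrow> f w \<noteq> 0"
  using f_zero[of w] sig_T rangeB_T by blast

lemma oT: "open (- T)" unfolding T_def by (rule open_Compl[OF closed_T])

lemma q_holo: "q holomorphic_on - T"
  unfolding q_def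
  by (intro holomorphic_intros holomorphic_on_subset[OF f_holo] holomorphic_on_subset[OF Phi_core(1)])
     (use sig_T Phi_nz in auto)

lemma G_out: assumes "w \<notin> T" shows "G analytic_on {w}" "G w = q w"
proof -
  have "q analytic_on {w}" using q_holo oT assms analytic_at by blast
  thus "G analytic_on {w}" "G w = q w" unfolding G_def
    by (auto intro: remove_sings_analytic_on)
qed

lemma G_A: "G analytic_on {complex_of_real ((lam j)\<^sup>2)} \<and> G (complex_of_real ((lam j)\<^sup>2)) \<noteq> 0"
proof -
  define p where "p = complex_of_real ((lam j)\<^sup>2)"
  obtain r g where r: "r > 0" "ball p r \<subseteq> - sigma_set (lam(j:=0))"
    "g holomorphic_on ball p r" "g p \<noteq> 0"
    "\<And>w. w \<in> ball p r - {p} \<Longrightarrow> Phi lam mu w = g w / (w - p)"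
    using Phi_pole_local[of j] unfolding p_def by blast
  have pT: "p \<in> T" "p \<noteq> 0" using A_in_sigma[of lam j] apos[of j] by (auto simp: T_def p_def)
  obtain r0 where r0: "r0 > 0" "\<And>w. w \<in> ball p r0 \<Longrightarrow> w \<in> T \<Longrightarrow> w = p"
    using T_isolated[of p] pT unfolding T_def by blast
  have fh: "f holomorphic_on ball p r - {p}"
    by (rule holomorphic_on_subset[OF f_holo]) (use r sigma_insert[of j] in \<open>auto simp: p_def\<close>)
  define n where "n = zorder f p"
  define h where "h = zor_poly f p"
  have n: "n = -1" using f_pole_ord[of j] by (simp add: n_def p_def)
  from zorder_exist_pole[OF fh _ _ f_pole[of j, folded p_def]] r(1)
  obtain r1 where r1: "h p \<noteq> 0" "r1 > 0" "cball p r1 \<subseteq> ball p r" "h holomorphic_on cball p r1"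
    "\<And>w. w \<in> cball p r1 - {p} \<Longrightarrow> f w = h w / (w - p) ^ nat (- n)"
    unfolding n_def h_def by auto
  define rho where "rho = min r0 r1"
  have rho: "rho > 0" using r0 r1 by (simp add: rho_def)
  have sub: "ball p rho - {p} \<subseteq> - T" using r0 by (auto simp: rho_def)
  have hq: "h p \<noteq> 0" "g p \<noteq> 0" using r1(1) r(4) by auto
  have "q holomorphic_on ball p rho - {p}" by (rule holomorphic_on_subset[OF q_holo sub])
  have "isCont h p"
      using continuous_on_interior[OF holomorphic_on_imp_continuous_on[OF r1(4)]] r1(2) by simp
  have "isCont g p"
      using holomorphic_on_imp_continuous_on[OF r(3)] r(1) continuous_on_interior[of "ball p r" g p] by simp
  have "q w = h w / g w" if w: "w \<in> ball p rho - {p}" for w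
  proof -
    have w1: "w \<in> cball p r1 - {p}" using w by (auto simp: rho_def)
    hence w2: "w \<in> ball p r - {p}" using r1(3) by auto
    have "w \<notin> T" using w sub by auto
    hence "Phi lam mu w \<noteq> 0" by (rule Phi_nz)
    moreover have "w - p \<noteq> 0" using w by auto
    have e1: "f w = h w / (w - p)" using r1(5)[OF w1] n by simp
    have e2: "Phi lam mu w = g w / (w - p)" using r(5)[OF w2] .
    show "q w = h w / g w" unfolding q_def e1 e2 using \<open>w - p \<noteq> 0\<close> by simp
  qed
  note rr = removable_ratio[of rho q p h g, OF rho \<open>q holomorphic_on _\<close> \<open>isCont h p\<close> \<open>isCont g p\<close> hq this]
  show ?thesis unfolding p_def[symmetric] G_def using rr by blast
qed

lemma G_B: "G analytic_on {complex_of_real ((mu j)\<^sup>2)} \<and> G (complex_of_real ((mu j)\<^sup>2)) \<noteq> 0"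
proof -
  define p where "p = complex_of_real ((mu j)\<^sup>2)"
  obtain r g where r: "r > 0" "ball p r \<subseteq> - sigma_set lam"
    "g holomorphic_on ball p r" "g p \<noteq> 0"
    "\<And>w. w \<in> ball p r \<Longrightarrow> Phi lam mu w = g w * (w - p)"
    using Phi_zero_local[of j] unfolding p_def by blast
  have pT: "p \<in> T" "p \<noteq> 0" using B_T[of j] bpos[of j] by (auto simp: p_def)
  obtain r0 where r0: "r0 > 0" "\<And>w. w \<in> ball p r0 \<Longrightarrow> w \<in> T \<Longrightarrow> w = p"
    using T_isolated[of p] pT unfolding T_def by blast
  have fh: "f holomorphic_on ball p r"
    by (rule holomorphic_on_subset[OF f_holo r(2)])
  define w0 where "w0 = p + complex_of_real (r/2) * \<i>"
  have w0b: "w0 \<in> ball p r"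
  proof -
    have "dist p w0 = r / 2" using r(1) by (simp add: w0_def dist_norm norm_mult)
    thus ?thesis using r(1) by simp
  qed
  have w0i: "Im w0 \<noteq> 0" using r(1) by (simp add: w0_def p_def)
  have "w0 \<notin> sigma_set lam" using T_real[of w0] w0i by auto
  moreover have "w0 \<notin> range (\<lambda>k. complex_of_real ((mu k)\<^sup>2))" using w0i by auto
  ultimately have "f w0 \<noteq> 0" using f_zero by blast
  hence nc: "\<exists>w\<in>ball p r. f w \<noteq> 0" using w0b by blast
  define n where "n = zorder f p"
  define h where "h = zor_poly f p"
  have n: "n = 1" using f_zord[of j] by (simp add: n_def p_def)
  have ex: "\<exists>r1. r1 > 0 \<and> cball p r1 \<subseteq> ball p r \<and> h holomorphic_on cball p r1 \<and>
    (\<forall>w\<in>cball p r1. f w = h w * (w - p) ^ nat n \<and> h w \<noteq> 0)"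
    unfolding n_def h_def
    by (rule conjunct2[OF zorder_exist_zero[OF fh open_ball connected_ball centre_in_ball[THEN iffD2, OF r(1)] nc]])
  then obtain r1 where r1: "r1 > 0" "cball p r1 \<subseteq> ball p r" "h holomorphic_on cball p r1"
    "\<And>w. w \<in> cball p r1 \<Longrightarrow> f w = h w * (w - p) ^ nat n \<and> h w \<noteq> 0"
    by blast
  have hp: "h p \<noteq> 0" using r1(4)[of p] r1(1) by simp
  define rho where "rho = min r0 r1"
  have rho: "rho > 0" using r0 r1 by (simp add: rho_def)
  have sub: "ball p rho - {p} \<subseteq> - T" using r0 by (auto simp: rho_def)
  have hq: "h p \<noteq> 0" "g p \<noteq> 0" using hp r(4) by auto
  have "q holomorphic_on ball p rho - {p}" by (rule holomorphic_on_subset[OF q_holo sub])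
  have "isCont h p"
      using continuous_on_interior[OF holomorphic_on_imp_continuous_on[OF r1(3)]] r1(1) by simp
  have "isCont g p"
      using holomorphic_on_imp_continuous_on[OF r(3)] r(1) continuous_on_interior[of "ball p r" g p] by simp
  have "q w = h w / g w" if w: "w \<in> ball p rho - {p}" for w
  proof -
    have w1: "w \<in> cball p r1" using w by (auto simp: rho_def)
    hence w2: "w \<in> ball p r" using r1(2) by auto
    have wp: "w - p \<noteq> 0" using w by auto
    have e1: "f w = h w * (w - p)" using r1(4)[OF w1] n by simp
    have e2: "Phi lam mu w = g w * (w - p)" using r(5)[OF w2] .
    show "q w = h w / g w" unfolding q_def e1 e2 using wp by simp
  qed
  note rr = removable_ratio[of rho q p h g, OF rho \<open>q holomorphic_on _\<close> \<open>isCont h p\<close> \<open>isCont g p\<close> hq this]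
  show ?thesis unfolding p_def[symmetric] G_def using rr by blast
qed

lemma G_ana_nz: assumes "p \<noteq> 0" shows "G analytic_on {p}" "G p \<noteq> 0"
proof -
  have "G analytic_on {p} \<and> G p \<noteq> 0"
  proof (cases "p \<in> T")
    case False thus ?thesis using G_out[OF False] f_nz Phi_nz by (simp add: q_def)
  next
    case True
    from True assms show ?thesis unfolding T_def
    proof (cases rule: T_cases)
      case (1 j) thus ?thesis using G_A by simp
    next
      case (2 j) thus ?thesis using G_B by simp
    qed
  qed
  thus "G analytic_on {p}" "G p \<noteq> 0" by auto
qed

end


context uniq begin

lemma G_holo: "G holomorphic_on - {0}"
proof -
  have "G analytic_on - {0}" using G_ana_nz(1) analytic_on_analytic_at by blast
  thus ?thesis by (rule analytic_imp_holomorphic)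
qed

lemma G_isCont: "p \<noteq> 0 \<Longrightarrow> isCont G p"
  using G_ana_nz(1) analytic_at_imp_isCont by blast

lemma G_lim: "(G \<longlongrightarrow> 1) at_infinity"
proof -
  have "(q \<longlongrightarrow> 1 / 1) at_infinity"
    unfolding q_def by (rule tendsto_divide[OF f_lim Phi_lim_inf]) simp
  moreover have "eventually (\<lambda>w. q w = G w) at_infinity"
  proof -
    have "eventually (\<lambda>w::complex. norm w \<ge> (lam 0)\<^sup>2 + 1) at_infinity"
      by (simp add: eventually_at_infinity) blast
    thus ?thesis
    proof eventually_elim
      case (elim w)
      have "w \<notin> T" using T_norm[of w] elim by (auto simp: T_def)
      thus ?case using G_out(2) by simp
    qed
  qed
  ultimately show ?thesis by (simp add: Lim_transform_eventually)
qed

lemma G_real_out: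
  assumes "w \<notin> T" "Im w = 0"
  shows "Im (G w) = 0"
proof -
  have cw: "cnj w = w" using assms(2) by (simp add: complex_eq_iff)
  have ws: "w \<notin> sigma_set lam" using assms(1) sig_T by auto
  have "Im (f w) = 0" using f_cnj[OF ws] cw by (metis cnj.simps(2) neg_equal_zero)
  moreover have "Im (Phi lam mu w) = 0" using Phi_cnj[OF ws] cw by (metis cnj.simps(2) neg_equal_zero)
  ultimately have "Im (q w) = 0" by (simp add: q_def Im_divide)
  thus ?thesis using G_out(2)[OF assms(1)] by simp
qed

lemma G_real:
  assumes "t \<noteq> 0"
  shows "Im (G (complex_of_real t)) = 0"
proof (cases "complex_of_real t \<in> T")
  case False thus ?thesis by (intro G_real_out) auto
next
  case True
  obtain r where r: "r > 0" "\<And>w. w \<in> ball (complex_of_real t) r \<Longrightarrow> w \<in> T \<Longrightarrow> w = complex_of_real t"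
    using T_isolated[of "complex_of_real t"] True assms unfolding T_def by auto
  show ?thesis
  proof (rule real_limit_Im[OF G_isCont r(1)])
    show "complex_of_real t \<noteq> 0" using assms by simp
    fix s :: real assume s: "0 < s" "s < r"
    have "complex_of_real (t + s) \<in> ball (complex_of_real t) r"
      using s by (simp add: dist_norm)
    moreover have "complex_of_real (t + s) \<noteq> complex_of_real t" using s by simp
    ultimately have "complex_of_real (t + s) \<notin> T" using r(2) by blast
    thus "Im (G (complex_of_real (t + s))) = 0" by (intro G_real_out) auto
  qed
qed

lemma G_UHP:
  assumes "Im w > 0"
  shows "G w \<notin> \<real>\<^sub>\<le>\<^sub>0"
proof
  assume neg: "G w \<in> \<real>\<^sub>\<le>\<^sub>0"
  have wT: "w \<notin> T" using T_real[of w] assms by (auto simp: T_def)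
  have Pn: "Phi lam mu w \<noteq> 0" by (rule Phi_nz[OF wT])
  define x where "x = G w"
  have x: "Re x \<le> 0" "Im x = 0" using neg by (auto simp: x_def complex_nonpos_Reals_iff)
  have "f w = x * Phi lam mu w" using G_out(2)[OF wT] Pn by (simp add: x_def q_def)
  hence "Im (f w) = Re x * Im (Phi lam mu w)" using x(2) by simp
  moreover have "Im (Phi lam mu w) < 0" by (rule Phi_Im_neg[OF assms])
  ultimately have "Im (f w) \<ge> 0" using x(1) by (simp add: mult_nonpos_nonpos)
  thus False using f_im[OF assms] by simp
qed

lemma G_LHP:
  assumes "Im w < 0"
  shows "G w \<notin> \<real>\<^sub>\<le>\<^sub>0"
proof -
  have wT: "w \<notin> T" "cnj w \<notin> T" using T_real[of w] T_real[of "cnj w"] assms by (auto simp: T_def)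
  have cs: "cnj w \<notin> sigma_set lam" using wT sig_T by auto
  have "f w = cnj (f (cnj w))" using f_cnj[OF cs] by simp
  moreover have "Phi lam mu w = cnj (Phi lam mu (cnj w))" using Phi_cnj[OF cs] by simp
  ultimately have "G w = cnj (G (cnj w))"
    using G_out(2)[OF wT(1)] G_out(2)[OF wT(2)] by (simp add: q_def)
  moreover have "G (cnj w) \<notin> \<real>\<^sub>\<le>\<^sub>0" using G_UHP[of "cnj w"] assms by simp
  ultimately show ?thesis by (simp add: complex_nonpos_Reals_iff)
qed

lemma G_real_pos:
  assumes "t \<noteq> 0"
  shows "Re (G (complex_of_real t)) > 0"
proof (rule ccontr)
  assume neg: "\<not> Re (G (complex_of_real t)) > 0"
  define F where "F = (\<lambda>x::real. Re (G (complex_of_real x)))"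
  have Ft: "F t \<le> 0" using neg by (simp add: F_def)
  have cont: "isCont F x" if "x \<noteq> 0" for x
  proof -
    have c0: "isCont (\<lambda>y::real. complex_of_real y) x" by (intro continuous_intros)
    have "isCont (\<lambda>y. G (complex_of_real y)) x"
      by (rule isCont_o2[OF c0 G_isCont]) (use that in simp)
    thus ?thesis unfolding F_def by (rule continuous_Re)
  qed
  have zero: "F x \<noteq> 0" if "x \<noteq> 0" for x
  proof
    assume "F x = 0"
    hence "G (complex_of_real x) = 0" using G_real[OF that] by (simp add: F_def complex_eq_iff)
    thus False using G_ana_nz(2)[of "complex_of_real x"] that by simp
  qed
  obtain b where b: "\<And>w. norm w \<ge> b \<Longrightarrow> dist (G w) 1 < 1/2"
    using G_lim[unfolded tendsto_iff, rule_format, of "1/2"] by (auto simp: eventually_at_infinity)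
  have big: "F x > 0" if "\<bar>x\<bar> \<ge> b" for x
  proof -
    have "dist (G (complex_of_real x)) 1 < 1/2" using b[of "complex_of_real x"] that by simp
    hence "\<bar>Re (G (complex_of_real x)) - 1\<bar> < 1/2"
      using abs_Re_le_cmod[of "G (complex_of_real x) - 1"] by (simp add: dist_norm)
    thus ?thesis unfolding F_def by linarith
  qed
  show False
  proof (cases "t > 0")
    case True
    define t1 where "t1 = max (t + 1) (\<bar>b\<bar> + 1)"
    have "F t1 > 0" by (rule big) (auto simp: t1_def)
    moreover have "t \<le> t1" by (simp add: t1_def)
    ultimately obtain x where x: "t \<le> x" "x \<le> t1" "F x = 0"
      using IVT[of F t 0 t1] Ft cont True by force
    thus False using zero[of x] True by simp
  next
    case False
    hence tn: "t < 0" using assms by simp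
    define t1 where "t1 = min (t - 1) (- \<bar>b\<bar> - 1)"
    have "F t1 > 0" by (rule big) (auto simp: t1_def)
    moreover have "t1 \<le> t" by (simp add: t1_def)
    ultimately obtain x where x: "t1 \<le> x" "x \<le> t" "F x = 0"
      using IVT2[of F t 0 t1] Ft cont tn by force
    thus False using zero[of x] tn by simp
  qed
qed

lemma G_slit:
  assumes "w \<noteq> 0"
  shows "G w \<notin> \<real>\<^sub>\<le>\<^sub>0"
proof (cases "Im w" "0::real" rule: linorder_cases)
  case less thus ?thesis by (rule G_LHP)
next
  case greater thus ?thesis by (rule G_UHP)
next
  case equal
  hence w: "w = complex_of_real (Re w)" by (simp add: complex_eq_iff)
  have "Re w \<noteq> 0" using assms equal by (simp add: complex_eq_iff)
  hence "Re (G w) > 0" using G_real_pos[of "Re w"] w by simp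
  thus ?thesis by (simp add: complex_nonpos_Reals_iff)
qed

end


context uniq begin

lemma G_one:
  assumes "w \<noteq> 0"
  shows "G w = 1"
proof -
  define H where "H = (\<lambda>w. (csqrt (G w) - 1) / (csqrt (G w) + 1))"
  have Rp: "Re (csqrt (G w)) > 0" if "w \<noteq> 0" for w using csqrt_Re_pos[OF G_slit[OF that]] .
  have den: "csqrt (G w) + 1 \<noteq> 0" if "w \<noteq> 0" for w
  proof
    assume "csqrt (G w) + 1 = 0"
    hence e: "csqrt (G w) = - 1" by (simp add: eq_neg_iff_add_eq_0)
    show False using Rp[OF that, unfolded e] by simp
  qed
  have sq: "(\<lambda>w. csqrt (G w)) holomorphic_on - {0}"
    by (rule holomorphic_on_csqrt'[OF G_holo]) (use G_slit in auto)
  have Hh: "H holomorphic_on UNIV - {0}"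
  proof -
    have sq': "(\<lambda>w. csqrt (G w)) holomorphic_on UNIV - {0}" using sq by (simp add: Compl_eq_Diff_UNIV)
    show ?thesis unfolding H_def
      by (rule holomorphic_on_divide[OF holomorphic_on_diff[OF sq' holomorphic_on_const]
            holomorphic_on_add[OF sq' holomorphic_on_const]]) (use den in auto)
  qed
  have Hb: "norm (H w) \<le> 1" if "w \<noteq> 0" for w
  proof -
    define s where "s = csqrt (G w)"
    have "Re s > 0" using Rp[OF that] by (simp add: s_def)
    have "(cmod (s - 1))\<^sup>2 \<le> (cmod (s + 1))\<^sup>2"
      unfolding cmod_power2 using \<open>Re s > 0\<close> by (simp add: power2_eq_square algebra_simps)
    hence "cmod (s - 1) \<le> cmod (s + 1)" by (rule power2_le_imp_le) simp
    moreover have "cmod (s + 1) > 0" using den[OF that] by (simp add: s_def)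
    ultimately show ?thesis by (simp add: H_def s_def[symmetric] norm_divide)
  qed
  have Bd: "\<exists>B. eventually (\<lambda>z. norm (H z) \<le> B) (at 0)"
  proof (intro exI)
    show "eventually (\<lambda>z. norm (H z) \<le> 1) (at 0)"
      unfolding eventually_at_filter by (rule always_eventually) (use Hb in auto)
  qed
  have "\<exists>K. K holomorphic_on UNIV \<and> (\<forall>z\<in>UNIV - {0}. K z = H z)"
  proof -
    have int: "(0::complex) \<in> interior UNIV" by simp
    show ?thesis by (rule iffD2[OF holomorphic_on_extend_bounded[OF Hh int] Bd])
  qed
  then obtain K where K: "K holomorphic_on UNIV" "\<And>z. z \<in> UNIV - {0} \<Longrightarrow> K z = H z"
    by blast
  have c1: "isCont csqrt 1" by (rule continuous_at_csqrt) (simp add: complex_nonpos_Reals_iff)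
  have sl: "((\<lambda>w. csqrt (G w)) \<longlongrightarrow> 1) at_infinity"
    using isCont_tendsto_compose[OF c1 G_lim] by simp
  have "(H \<longlongrightarrow> (1 - 1) / (1 + 1)) at_infinity"
    unfolding H_def
    by (rule tendsto_divide[OF tendsto_diff[OF sl tendsto_const] tendsto_add[OF sl tendsto_const]]) simp
  hence Hl: "(H \<longlongrightarrow> 0) at_infinity" by simp
  have "eventually (\<lambda>z. H z = K z) at_infinity"
  proof -
    have "eventually (\<lambda>z::complex. norm z \<ge> 1) at_infinity"
      by (simp add: eventually_at_infinity) blast
    thus ?thesis
    proof eventually_elim
      case (elim z)
      hence "z \<noteq> 0" by auto
      thus ?case using K(2)[of z] by simp
    qed
  qed
  with Hl have "(K \<longlongrightarrow> 0) at_infinity" by (rule Lim_transform_eventually)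
  hence "K w = 0" by (rule Liouville_weak_0[OF K(1)])
  hence "H w = 0" using K(2)[of w] assms by simp
  hence "csqrt (G w) = 1" using den[OF assms] by (simp add: H_def)
  thus ?thesis by simp
qed

lemma f_eq_Phi:
  assumes "z \<notin> sigma_set lam"
  shows "f z = Phi lam mu z"
proof (cases "z \<in> T")
  case False
  have "z \<noteq> 0" using assms zero_in_sigma by blast
  hence "q z = 1" using G_one G_out(2)[OF False] by simp
  thus ?thesis using Phi_nz[OF False] by (simp add: q_def)
next
  case True
  hence "z \<in> sigma_set mu" using assms by (simp add: T_def)
  moreover have "z \<noteq> 0" using assms zero_in_sigma by blast
  ultimately have "z \<in> range (\<lambda>k. complex_of_real ((mu k)\<^sup>2))" unfolding sigma_set_def by simp
  thus ?thesis using f_zero[OF assms] Phi_zero_iff[OF assms] by simp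
qed

end

theorem lemma4p6:
  fixes lam mu :: "nat \<Rightarrow> real"
  assumes nz: "\<And>k. lam k \<noteq> 0" "\<And>k. mu k \<noteq> 0"
    and inter1: "\<And>k. \<bar>lam k\<bar> > \<bar>mu k\<bar>"
    and inter2: "\<And>k. \<bar>mu k\<bar> > \<bar>lam (Suc k)\<bar>"
    and lim: "lam \<longlonglongrightarrow> 0"
  shows "Phi_props lam mu (Phi lam mu) \<and>
         (\<forall>f. Phi_props lam mu f \<longrightarrow> (\<forall>z \<in> - sigma_set lam. f z = Phi lam mu z))"
proof -
  interpret ilace lam mu using assms by unfold_locales auto
  have "Phi_props lam mu (Phi lam mu)" by (rule Phi_has_props)
  moreover have "\<forall>z \<in> - sigma_set lam. f z = Phi lam mu z" if fp: "Phi_props lam mu f" for f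
  proof -
    interpret uniq lam mu f using fp by unfold_locales
    show ?thesis using f_eq_Phi by auto
  qed
  ultimately show ?thesis by blast
qed


end
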